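(* Let $\beta\in\Phi_+$, $i\in I$ and $w\in W^v$ with $w^{-1}(\alpha_i)=\alpha_i$. If $\beta$, $r_i(\beta)$ and $w(\beta)$ are all quantum roots, then $r_iw(\beta)$ is a quantum root, and $r_iw(\beta^\vee)=w(\beta^\vee)+r_i(\beta^\vee)-\beta^\vee$.
   Context: Kac–Moody root datum $(A,X,Y,(\alpha_i)_{i\in I},(\alpha_i^\vee)_{i\in I})$, generalized Cartan matrix $A$ with $\langle\alpha_i^\vee,\alpha_j\rangle=a_{i,j}$, simple reflections $r_i(x)=x-\langle\alpha_i^\vee,x\rangle\alpha_i$, $r_i(y)=y-\langle y,\alpha_i\rangle\alpha_i^\vee$, $W^v=\langle r_i\rangle$, $\Phi=W^v\{\alpha_i\}$, $\Phi_+=\Phi\cap\bigoplus\mathbb Z_{\ge0}\alpha_i$; coroot $\beta^\vee=w(\alpha_i^\vee)$ and $s_\beta=wr_iw^{-1}$ for $\beta=w(\alpha_i)$. $\mathrm{Inv}(w)=\{\alpha\in\Phi_+\mid w\alpha\in\Phi_-\}$; $\beta\in\Phi_+$ is quantum if $\langle\beta^\vee,\gamma\rangle=1$ for all $\gamma\in\mathrm{Inv}(s_\beta)\setminus\{\beta\}$ (in particular quantum roots are positive). *)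

theory Defs
  imports Main
begin

(* Root lattice Q = \<Oplus>_i Z alpha_i and coroot lattice
   Q^v = \<Oplus>_i Z alpha_i^v are both modelled as 'i \<Rightarrow> int (coordinates in the simple
   (co)roots).  A is the generalized Cartan matrix, A i j = <alpha_i^v, alpha_j>. *)

definition gcm :: "('i::finite \<Rightarrow> 'i \<Rightarrow> int) \<Rightarrow> bool" where
  "gcm A \<longleftrightarrow> (\<forall>i. A i i = 2) \<and> (\<forall>i j. i \<noteq> j \<longrightarrow> A i j \<le> 0)
           \<and> (\<forall>i j. A i j = 0 \<longleftrightarrow> A j i = 0)"

(* simple root alpha_i (in Q) and simple coroot alpha_i^v (in Q^v) *)
definition sroot :: "'i \<Rightarrow> 'i \<Rightarrow> int" where
  "sroot i = (\<lambda>j. if j = i then 1 else 0)"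

(* pairing <y, x> for y in Q^v, x in Q *)
definition pair :: "('i::finite \<Rightarrow> 'i \<Rightarrow> int) \<Rightarrow> ('i \<Rightarrow> int) \<Rightarrow> ('i \<Rightarrow> int) \<Rightarrow> int" where
  "pair A y x = (\<Sum>j\<in>UNIV. \<Sum>k\<in>UNIV. y j * A j k * x k)"

definition sr :: "('i::finite \<Rightarrow> 'i \<Rightarrow> int) \<Rightarrow> 'i \<Rightarrow> ('i \<Rightarrow> int) \<Rightarrow> ('i \<Rightarrow> int)" where
  "sr A i x = (\<lambda>j. x j - pair A (sroot i) x * sroot i j)"

definition srv :: "('i::finite \<Rightarrow> 'i \<Rightarrow> int) \<Rightarrow> 'i \<Rightarrow> ('i \<Rightarrow> int) \<Rightarrow> ('i \<Rightarrow> int)" where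
  "srv A i y = (\<lambda>j. y j - pair A y (sroot i) * sroot i j)"

(* An element of W^v is represented by a word [i1,...,ik], acting as r_i1 \<circ> ... \<circ> r_ik *)
definition act :: "('i::finite \<Rightarrow> 'i \<Rightarrow> int) \<Rightarrow> 'i list \<Rightarrow> ('i \<Rightarrow> int) \<Rightarrow> ('i \<Rightarrow> int)" where
  "act A ws x = foldr (sr A) ws x"

definition actv :: "('i::finite \<Rightarrow> 'i \<Rightarrow> int) \<Rightarrow> 'i list \<Rightarrow> ('i \<Rightarrow> int) \<Rightarrow> ('i \<Rightarrow> int)" where
  "actv A ws y = foldr (srv A) ws y"

definition roots :: "('i::finite \<Rightarrow> 'i \<Rightarrow> int) \<Rightarrow> ('i \<Rightarrow> int) set" where
  "roots A = {act A ws (sroot i) | ws i. True}"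

definition pos_roots :: "('i::finite \<Rightarrow> 'i \<Rightarrow> int) \<Rightarrow> ('i \<Rightarrow> int) set" where
  "pos_roots A = {b \<in> roots A. \<forall>j. 0 \<le> b j}"

definition neg_roots :: "('i::finite \<Rightarrow> 'i \<Rightarrow> int) \<Rightarrow> ('i \<Rightarrow> int) set" where
  "neg_roots A = {b \<in> roots A. \<forall>j. b j \<le> 0}"

definition coroot :: "('i::finite \<Rightarrow> 'i \<Rightarrow> int) \<Rightarrow> ('i \<Rightarrow> int) \<Rightarrow> ('i \<Rightarrow> int)" where
  "coroot A b = (SOME y. \<exists>ws i. b = act A ws (sroot i) \<and> y = actv A ws (sroot i))"

(* s_beta = w r_i w^{-1} (as a map on Q) for beta = w(alpha_i); w^{-1} is the reversed word *)
definition refl :: "('i::finite \<Rightarrow> 'i \<Rightarrow> int) \<Rightarrow> ('i \<Rightarrow> int) \<Rightarrow> (('i \<Rightarrow> int) \<Rightarrow> ('i \<Rightarrow> int))" where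
  "refl A b = (SOME f. \<exists>ws i. b = act A ws (sroot i)
                  \<and> f = (\<lambda>x. act A ws (sr A i (act A (rev ws) x))))"

(* Inv(w) = {alpha in Phi_+ | w alpha in Phi_-}, w given as its action on Q *)
definition Inv :: "('i::finite \<Rightarrow> 'i \<Rightarrow> int) \<Rightarrow> (('i \<Rightarrow> int) \<Rightarrow> ('i \<Rightarrow> int)) \<Rightarrow> ('i \<Rightarrow> int) set" where
  "Inv A f = {a \<in> pos_roots A. f a \<in> neg_roots A}"

definition quantum :: "('i::finite \<Rightarrow> 'i \<Rightarrow> int) \<Rightarrow> ('i \<Rightarrow> int) \<Rightarrow> bool" where
  "quantum A b \<longleftrightarrow> b \<in> pos_roots A \<and>
     (\<forall>g \<in> Inv A (refl A b) - {b}. pair A (coroot A b) g = 1)"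

end

theory Submission
  imports Defs
begin

abbreviation e :: "'i \<Rightarrow> 'i \<Rightarrow> int" where "e \<equiv> sroot"

lemma pair_right_lin:
  "pair A y (\<lambda>j. p * x j + q * z j) = p * pair A y x + q * pair A y z"
  unfolding pair_def by (simp add: algebra_simps sum.distrib sum_distrib_left)

lemma pair_left_lin:
  "pair A (\<lambda>j. p * x j + q * z j) y = p * pair A x y + q * pair A z y"
  unfolding pair_def by (simp add: algebra_simps sum.distrib sum_distrib_left)

lemma pair_e_e: "pair A (e i) (e j) = A i j"
proof -
  have "(\<Sum>k\<in>UNIV. (if j0 = i then 1 else 0) * A j0 k * (if k = j then 1 else 0)) = (if j0 = i then A j0 j else 0)" for j0
    by (simp add: if_distrib[of "\<lambda>x. _ * x"] sum.delta cong: if_cong)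
  then show ?thesis unfolding pair_def sroot_def by (simp add: sum.delta)
qed

lemma pair_right_sr: "pair A y (sr A i x) = pair A y x - pair A (e i) x * pair A y (e i)"
proof -
  have h: "sr A i x = (\<lambda>j. 1 * x j + (- pair A (e i) x) * e i j)"
    unfolding sr_def by auto
  show ?thesis unfolding h pair_right_lin by simp
qed

lemma pair_left_srv: "pair A (srv A i y) x = pair A y x - pair A y (e i) * pair A (e i) x"
proof -
  have h: "srv A i y = (\<lambda>j. 1 * y j + (- pair A y (e i)) * e i j)"
    unfolding srv_def by auto
  show ?thesis unfolding h pair_left_lin by simp
qed

lemma sr_sr: assumes "gcm A" shows "sr A i (sr A i x) = x"
proof -
  have "A i i = 2" using assms by (simp add: gcm_def)
  then show ?thesis
    by (simp add: sr_def[of A i "sr A i x"] pair_right_sr pair_e_e) (simp add: sr_def algebra_simps)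
qed

lemma srv_srv: assumes "gcm A" shows "srv A i (srv A i y) = y"
proof -
  have "A i i = 2" using assms by (simp add: gcm_def)
  then show ?thesis
    by (simp add: srv_def[of A i "srv A i y"] pair_left_srv pair_e_e) (simp add: srv_def algebra_simps)
qed

lemma pair_srv_sr: "pair A (srv A i y) x = pair A y (sr A i x)"
  by (simp add: pair_left_srv pair_right_sr algebra_simps)

lemma sr_lin: "sr A i (\<lambda>j. p * x j + q * z j) = (\<lambda>j. p * sr A i x j + q * sr A i z j)"
  by (simp add: sr_def pair_right_lin algebra_simps)
lemma srv_lin: "srv A i (\<lambda>j. p * x j + q * z j) = (\<lambda>j. p * srv A i x j + q * srv A i z j)"
  by (simp add: srv_def pair_left_lin algebra_simps)

lemma act_Nil[simp]: "act A [] x = x" by (simp add: act_def)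
lemma act_Cons[simp]: "act A (c # ws) x = sr A c (act A ws x)" by (simp add: act_def)
lemma act_append: "act A (xs @ ys) x = act A xs (act A ys x)" by (simp add: act_def)
lemma actv_Nil[simp]: "actv A [] x = x" by (simp add: actv_def)
lemma actv_Cons[simp]: "actv A (c # ws) x = srv A c (actv A ws x)" by (simp add: actv_def)
lemma actv_append: "actv A (xs @ ys) x = actv A xs (actv A ys x)" by (simp add: actv_def)

lemma act_lin: "act A ws (\<lambda>j. p * x j + q * z j) = (\<lambda>j. p * act A ws x j + q * act A ws z j)"
  by (induction ws) (simp_all add: sr_lin)
lemma actv_lin: "actv A ws (\<lambda>j. p * x j + q * z j) = (\<lambda>j. p * actv A ws x j + q * actv A ws z j)"
  by (induction ws) (simp_all add: srv_lin)

lemma act_rev_act: assumes "gcm A" shows "act A (rev ws) (act A ws x) = x"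
  using assms by (induction ws arbitrary: x) (simp_all add: act_append sr_sr)
lemma act_act_rev: assumes "gcm A" shows "act A ws (act A (rev ws) x) = x"
  using act_rev_act[OF assms, of "rev ws"] by simp
lemma actv_rev_actv: assumes "gcm A" shows "actv A (rev ws) (actv A ws x) = x"
  using assms by (induction ws arbitrary: x) (simp_all add: actv_append srv_srv)
lemma actv_actv_rev: assumes "gcm A" shows "actv A ws (actv A (rev ws) x) = x"
  using actv_rev_actv[OF assms, of "rev ws"] by simp

lemma pair_actv: "pair A (actv A ws y) x = pair A y (act A (rev ws) x)"
  by (induction ws arbitrary: x) (simp_all add: pair_srv_sr act_append)

definition Mp :: "('i::finite \<Rightarrow> 'i \<Rightarrow> int) \<Rightarrow> 'i list \<Rightarrow> (('i \<Rightarrow> int) \<Rightarrow> ('i \<Rightarrow> int)) \<times> (('i \<Rightarrow> int) \<Rightarrow> ('i \<Rightarrow> int))" where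
  "Mp A ws = (act A ws, actv A ws)"

lemma Mp_append_cong: "Mp A xs = Mp A xs' \<Longrightarrow> Mp A ys = Mp A ys' \<Longrightarrow> Mp A (xs @ ys) = Mp A (xs' @ ys')"
proof -
  assume a: "Mp A xs = Mp A xs'" "Mp A ys = Mp A ys'"
  then have "act A xs = act A xs'" "act A ys = act A ys'" "actv A xs = actv A xs'" "actv A ys = actv A ys'"
    unfolding Mp_def by auto
  then show ?thesis unfolding Mp_def by (simp add: act_append[abs_def] actv_append[abs_def])
qed

lemma Mp_cancel: assumes "gcm A" shows "Mp A (xs @ [c, c] @ ys) = Mp A (xs @ ys)"
  unfolding Mp_def using assms by (simp add: act_append actv_append sr_sr srv_srv fun_eq_iff)

lemma Mp_Nil_act: "Mp A ws = Mp A [] \<Longrightarrow> act A ws x = x \<and> actv A ws x = x"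
  unfolding Mp_def by (auto simp: fun_eq_iff)

definition len :: "('i::finite \<Rightarrow> 'i \<Rightarrow> int) \<Rightarrow> _ \<Rightarrow> nat" where
  "len A f = (LEAST n. \<exists>ws. length ws = n \<and> Mp A ws = f)"

lemma len_le: "len A (Mp A ws) \<le> length ws"
  unfolding len_def by (rule Least_le) blast

lemma len_ex: "\<exists>ws'. length ws' = len A (Mp A ws) \<and> Mp A ws' = Mp A ws"
  unfolding len_def by (rule LeastI_ex) blast

lemma len_append: "len A (Mp A (xs @ ys)) \<le> len A (Mp A xs) + len A (Mp A ys)"
proof -
  obtain xs' where x: "length xs' = len A (Mp A xs)" "Mp A xs' = Mp A xs" using len_ex by blast
  obtain ys' where y: "length ys' = len A (Mp A ys)" "Mp A ys' = Mp A ys" using len_ex by blast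
  have "Mp A (xs @ ys) = Mp A (xs' @ ys')" using Mp_append_cong x y by metis
  then show ?thesis using len_le[of A "xs' @ ys'"] x y by simp
qed

lemma len_snoc: "len A (Mp A (xs @ [c])) \<le> len A (Mp A xs) + 1"
  using len_append[of A xs "[c]"] len_le[of A "[c]"] by simp

definition lenI :: "('i::finite \<Rightarrow> 'i \<Rightarrow> int) \<Rightarrow> 'i \<Rightarrow> 'i \<Rightarrow> _ \<Rightarrow> nat" where
  "lenI A s t f = (LEAST n. \<exists>ws. set ws \<subseteq> {s, t} \<and> length ws = n \<and> Mp A ws = f)"

lemma lenI_le: "set ws \<subseteq> {s, t} \<Longrightarrow> lenI A s t (Mp A ws) \<le> length ws"
  unfolding lenI_def by (rule Least_le) blast

lemma lenI_ex: "set ws \<subseteq> {s, t} \<Longrightarrow> \<exists>ws'. set ws' \<subseteq> {s, t} \<and> length ws' = lenI A s t (Mp A ws) \<and> Mp A ws' = Mp A ws"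
  unfolding lenI_def by (rule LeastI_ex) blast

lemma len_le_lenI: assumes "set ws \<subseteq> {s, t}" shows "len A (Mp A ws) \<le> lenI A s t (Mp A ws)"
proof -
  obtain ws' where w: "set ws' \<subseteq> {s, t}" "length ws' = lenI A s t (Mp A ws)" "Mp A ws' = Mp A ws"
    using lenI_ex[OF assms] by blast
  show ?thesis using len_le[of A ws'] w by simp
qed

lemma lenI_Cons: assumes "c \<in> {s, t}" "set ws \<subseteq> {s, t}"
  shows "lenI A s t (Mp A (c # ws)) \<le> lenI A s t (Mp A ws) + 1"
proof -
  obtain ws' where w: "set ws' \<subseteq> {s, t}" "length ws' = lenI A s t (Mp A ws)" "Mp A ws' = Mp A ws"
    using lenI_ex[OF assms(2)] by blast
  have "Mp A (c # ws) = Mp A ([c] @ ws')" using Mp_append_cong[of A "[c]" "[c]" ws ws'] w by simp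
  then show ?thesis using lenI_le[of "c # ws'" s t A] w assms by simp
qed

fun alt :: "'i \<Rightarrow> 'i \<Rightarrow> nat \<Rightarrow> 'i list" where
  "alt s t 0 = []"
| "alt s t (Suc k) = (if even k then t else s) # alt s t k"

lemma length_alt[simp]: "length (alt s t k) = k" by (induction k) auto
lemma set_alt: "set (alt s t k) \<subseteq> {s, t}" by (induction k) auto

lemma drop_alt: "drop j (alt s t (j + n)) = alt s t n"
  by (induction j) (auto simp: drop_Suc)

definition G :: "'i \<Rightarrow> 'i \<Rightarrow> int \<Rightarrow> int \<Rightarrow> 'i \<Rightarrow> int" where
  "G s t p q = (\<lambda>j. p * e s j + q * e t j)"

lemma sr_G_s: "sr A s (G s t p q) = G s t (p - (p * A s s + q * A s t)) q"
  unfolding G_def sr_def by (simp add: pair_right_lin pair_e_e algebra_simps)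
lemma sr_G_t: "sr A t (G s t p q) = G s t p (q - (p * A t s + q * A t t))"
  unfolding G_def sr_def by (simp add: pair_right_lin pair_e_e algebra_simps)
lemma srv_G_s: "srv A s (G s t p q) = G s t (p - (p * A s s + q * A t s)) q"
  unfolding G_def srv_def by (simp add: pair_left_lin pair_e_e algebra_simps)
lemma srv_G_t: "srv A t (G s t p q) = G s t p (q - (p * A s t + q * A t t))"
  unfolding G_def srv_def by (simp add: pair_left_lin pair_e_e algebra_simps)

lemma G_e: "e s = G s t 1 0" unfolding G_def by simp

fun fseq :: "int \<Rightarrow> int \<Rightarrow> nat \<Rightarrow> int \<times> int" where
  "fseq X Y 0 = (1, 0)"
| "fseq X Y (Suc k) = (if even k then (fst (fseq X Y k), Y * fst (fseq X Y k) - snd (fseq X Y k))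
                      else (X * snd (fseq X Y k) - fst (fseq X Y k), snd (fseq X Y k)))"

lemma act_alt: assumes "gcm A"
  shows "act A (alt s t k) (e s) = G s t (fst (fseq (- A s t) (- A t s) k)) (snd (fseq (- A s t) (- A t s) k))"
proof (induction k)
  case 0 then show ?case by (simp add: G_e[of s t])
next
  case (Suc k)
  have "A s s = 2" "A t t = 2" using assms by (auto simp: gcm_def)
  then show ?case using Suc by (auto simp: sr_G_s sr_G_t intro!: arg_cong2[where f="G s t"])
qed

lemma actv_alt: assumes "gcm A"
  shows "actv A (alt s t k) (e s) = G s t (fst (fseq (- A t s) (- A s t) k)) (snd (fseq (- A t s) (- A s t) k))"
proof (induction k)
  case 0 then show ?case by (simp add: G_e[of s t])
next
  case (Suc k)
  have "A s s = 2" "A t t = 2" using assms by (auto simp: gcm_def)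
  then show ?case using Suc by (auto simp: srv_G_s srv_G_t intro!: arg_cong2[where f="G s t"])
qed

lemma fseq_inf:
  assumes "X \<ge> 0" "Y \<ge> 0" "X * Y \<ge> 4"
  shows "fst (fseq X Y k) \<ge> 0 \<and> snd (fseq X Y k) \<ge> 0 \<and>
         (if even k then 2 * snd (fseq X Y k) \<le> Y * fst (fseq X Y k)
          else 2 * fst (fseq X Y k) \<le> X * snd (fseq X Y k))"
proof (induction k)
  case 0 then show ?case using assms by simp
next
  case (Suc k)
  obtain p q where pq: "fseq X Y k = (p, q)" by fastforce
  show ?case
  proof (cases "even k")
    case True
    with Suc pq have h: "p \<ge> 0" "q \<ge> 0" "2 * q \<le> Y * p" by auto
    have "X * (2 * q) \<le> X * (Y * p)" using h assms by (simp add: mult_left_mono)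
    moreover have "4 * p \<le> X * Y * p" using assms h by (simp add: mult_right_mono)
    ultimately have "2 * p \<le> X * (Y * p - q)" by (simp add: algebra_simps)
    then show ?thesis using True pq h by simp
  next
    case False
    with Suc pq have h: "p \<ge> 0" "q \<ge> 0" "2 * p \<le> X * q" by auto
    have "Y * (2 * p) \<le> Y * (X * q)" using h assms by (simp add: mult_left_mono)
    moreover have "4 * q \<le> X * Y * q" using assms h by (simp add: mult_right_mono)
    ultimately have "2 * q \<le> Y * (X * q - p)" by (simp add: algebra_simps)
    then show ?thesis using False pq h by simp
  qed
qed

definition H :: "'i \<Rightarrow> 'i \<Rightarrow> ('i \<Rightarrow> int) \<Rightarrow> int \<Rightarrow> int \<Rightarrow> 'i \<Rightarrow> int" where
  "H s t x c d = (\<lambda>j. x j + c * e s j + d * e t j)"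

lemma H0: "H s t x 0 0 = x" unfolding H_def by simp

lemma pair_H_right: "pair A y (H s t x c d) = pair A y x + c * pair A y (e s) + d * pair A y (e t)"
  unfolding H_def pair_def by (simp add: algebra_simps sum.distrib sum_distrib_left)
lemma pair_H_left: "pair A (H s t y c d) x = pair A y x + c * pair A (e s) x + d * pair A (e t) x"
  unfolding H_def pair_def by (simp add: algebra_simps sum.distrib sum_distrib_left)

lemma sr_H_s: "sr A s (H s t x c d) = H s t x (c - (pair A (e s) x + c * A s s + d * A s t)) d"
  unfolding sr_def pair_H_right pair_e_e by (simp add: H_def algebra_simps)
lemma sr_H_t: "sr A t (H s t x c d) = H s t x c (d - (pair A (e t) x + c * A t s + d * A t t))"
  unfolding sr_def pair_H_right pair_e_e by (simp add: H_def algebra_simps)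
lemma srv_H_s: "srv A s (H s t y c d) = H s t y (c - (pair A y (e s) + c * A s s + d * A t s)) d"
  unfolding srv_def pair_H_left pair_e_e by (simp add: H_def algebra_simps)
lemma srv_H_t: "srv A t (H s t y c d) = H s t y c (d - (pair A y (e t) + c * A s t + d * A t t))"
  unfolding srv_def pair_H_left pair_e_e by (simp add: H_def algebra_simps)

lemma alt_SS: "alt s t (Suc (Suc k)) = (if even k then s else t) # (if even k then t else s) # alt s t k"
  by simp
lemma alt_2: "alt s t 2 = [s,t]" using alt_SS[of s t 0] by (simp add: numeral_2_eq_2)
lemma alt_3: "alt s t 3 = [t,s,t]" using alt_SS[of s t 1] by (simp add: numeral_3_eq_3)
lemma alt_4: "alt s t 4 = [s,t,s,t]"
proof -
  have "(4::nat) = Suc (Suc 2)" by simp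
  then show ?thesis using alt_SS[of s t 2] alt_2 by simp
qed
lemma alt_6: "alt s t 6 = [s,t,s,t,s,t]"
proof -
  have "(6::nat) = Suc (Suc 4)" by simp
  then show ?thesis using alt_SS[of s t 4] alt_4 by simp
qed



lemma braid_0:
  assumes "A s s = 2" "A t t = 2" "A s t = (0)" "A t s = (0)"
  shows "Mp A (alt s t 2) = Mp A (alt t s 2)"
proof -
  have 1: "act A (alt s t 2) (H s t x 0 0) = act A (alt t s 2) (H s t x 0 0)" for x
    unfolding alt_2 act_Cons act_Nil sr_H_s sr_H_t assms
    by (rule arg_cong2[where f="H s t x"]) (simp_all add: algebra_simps)
  have 2: "actv A (alt s t 2) (H s t x 0 0) = actv A (alt t s 2) (H s t x 0 0)" for x
    unfolding alt_2 actv_Cons actv_Nil srv_H_s srv_H_t assms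
    by (rule arg_cong2[where f="H s t x"]) (simp_all add: algebra_simps)
  show ?thesis using 1 2 unfolding Mp_def H0 by (simp add: fun_eq_iff)
qed

lemma braid_1:
  assumes "A s s = 2" "A t t = 2" "A s t = (- 1)" "A t s = (- 1)"
  shows "Mp A (alt s t 3) = Mp A (alt t s 3)"
proof -
  have 1: "act A (alt s t 3) (H s t x 0 0) = act A (alt t s 3) (H s t x 0 0)" for x
    unfolding alt_3 act_Cons act_Nil sr_H_s sr_H_t assms
    by (rule arg_cong2[where f="H s t x"]) (simp_all add: algebra_simps)
  have 2: "actv A (alt s t 3) (H s t x 0 0) = actv A (alt t s 3) (H s t x 0 0)" for x
    unfolding alt_3 actv_Cons actv_Nil srv_H_s srv_H_t assms
    by (rule arg_cong2[where f="H s t x"]) (simp_all add: algebra_simps)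
  show ?thesis using 1 2 unfolding Mp_def H0 by (simp add: fun_eq_iff)
qed

lemma braid_2:
  assumes "A s s = 2" "A t t = 2" "A s t = (- 1)" "A t s = (- 2)"
  shows "Mp A (alt s t 4) = Mp A (alt t s 4)"
proof -
  have 1: "act A (alt s t 4) (H s t x 0 0) = act A (alt t s 4) (H s t x 0 0)" for x
    unfolding alt_4 act_Cons act_Nil sr_H_s sr_H_t assms
    by (rule arg_cong2[where f="H s t x"]) (simp_all add: algebra_simps)
  have 2: "actv A (alt s t 4) (H s t x 0 0) = actv A (alt t s 4) (H s t x 0 0)" for x
    unfolding alt_4 actv_Cons actv_Nil srv_H_s srv_H_t assms
    by (rule arg_cong2[where f="H s t x"]) (simp_all add: algebra_simps)
  show ?thesis using 1 2 unfolding Mp_def H0 by (simp add: fun_eq_iff)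
qed

lemma braid_3:
  assumes "A s s = 2" "A t t = 2" "A s t = (- 2)" "A t s = (- 1)"
  shows "Mp A (alt s t 4) = Mp A (alt t s 4)"
proof -
  have 1: "act A (alt s t 4) (H s t x 0 0) = act A (alt t s 4) (H s t x 0 0)" for x
    unfolding alt_4 act_Cons act_Nil sr_H_s sr_H_t assms
    by (rule arg_cong2[where f="H s t x"]) (simp_all add: algebra_simps)
  have 2: "actv A (alt s t 4) (H s t x 0 0) = actv A (alt t s 4) (H s t x 0 0)" for x
    unfolding alt_4 actv_Cons actv_Nil srv_H_s srv_H_t assms
    by (rule arg_cong2[where f="H s t x"]) (simp_all add: algebra_simps)
  show ?thesis using 1 2 unfolding Mp_def H0 by (simp add: fun_eq_iff)
qed

lemma braid_4:
  assumes "A s s = 2" "A t t = 2" "A s t = (- 1)" "A t s = (- 3)"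
  shows "Mp A (alt s t 6) = Mp A (alt t s 6)"
proof -
  have 1: "act A (alt s t 6) (H s t x 0 0) = act A (alt t s 6) (H s t x 0 0)" for x
    unfolding alt_6 act_Cons act_Nil sr_H_s sr_H_t assms
    by (rule arg_cong2[where f="H s t x"]) (simp_all add: algebra_simps)
  have 2: "actv A (alt s t 6) (H s t x 0 0) = actv A (alt t s 6) (H s t x 0 0)" for x
    unfolding alt_6 actv_Cons actv_Nil srv_H_s srv_H_t assms
    by (rule arg_cong2[where f="H s t x"]) (simp_all add: algebra_simps)
  show ?thesis using 1 2 unfolding Mp_def H0 by (simp add: fun_eq_iff)
qed

lemma braid_5:
  assumes "A s s = 2" "A t t = 2" "A s t = (- 3)" "A t s = (- 1)"
  shows "Mp A (alt s t 6) = Mp A (alt t s 6)"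
proof -
  have 1: "act A (alt s t 6) (H s t x 0 0) = act A (alt t s 6) (H s t x 0 0)" for x
    unfolding alt_6 act_Cons act_Nil sr_H_s sr_H_t assms
    by (rule arg_cong2[where f="H s t x"]) (simp_all add: algebra_simps)
  have 2: "actv A (alt s t 6) (H s t x 0 0) = actv A (alt t s 6) (H s t x 0 0)" for x
    unfolding alt_6 actv_Cons actv_Nil srv_H_s srv_H_t assms
    by (rule arg_cong2[where f="H s t x"]) (simp_all add: algebra_simps)
  show ?thesis using 1 2 unfolding Mp_def H0 by (simp add: fun_eq_iff)
qed

lemma fseq_num: "fseq X Y (numeral n) = (if even (pred_numeral n)
     then (fst (fseq X Y (pred_numeral n)), Y * fst (fseq X Y (pred_numeral n)) - snd (fseq X Y (pred_numeral n)))
     else (X * snd (fseq X Y (pred_numeral n)) - fst (fseq X Y (pred_numeral n)), snd (fseq X Y (pred_numeral n))))"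
  by (simp only: numeral_eq_Suc fseq.simps)

lemma fseq_fin:
  assumes "(X, Y, m) \<in> {(0,0,2),(1,1,3),(1,2,4),(2,1,4),(1,3,6),(3,1,6)}" "k < m"
  shows "fst (fseq X Y k) \<ge> 0 \<and> snd (fseq X Y k) \<ge> 0"
proof -
  have "k < 6" using assms by auto
  then have "k = 0 \<or> k = 1 \<or> k = 2 \<or> k = 3 \<or> k = 4 \<or> k = 5" by arith
  then show ?thesis using assms by (elim disjE; auto simp: fseq_num)
qed

lemma hd_alt: "hd (alt s t (Suc n)) = (if even n then t else s)" by simp

lemma alt_Nil_iff: "alt s t n = [] \<longleftrightarrow> n = 0"
  by (metis length_alt length_0_conv)

lemma last_alt_t: "n > 0 \<Longrightarrow> last (alt s t n) = t"
  by (induction n) (auto simp: alt_Nil_iff)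

lemma alt_char:
  assumes "set u \<subseteq> {s, t}" "s \<noteq> t" "\<forall>xs ys c. u \<noteq> xs @ [c, c] @ ys" "u = [] \<or> last u \<noteq> s"
  shows "u = alt s t (length u)"
  using assms
proof (induction u)
  case Nil then show ?case by simp
next
  case (Cons c u')
  have na: "\<forall>xs ys c. u' \<noteq> xs @ [c, c] @ ys"
  proof (intro allI notI)
    fix xs ys d assume "u' = xs @ [d, d] @ ys"
    then have "c # u' = (c # xs) @ [d, d] @ ys" by simp
    then show False using Cons.prems(3) by blast
  qed
  show ?case
  proof (cases "u' = []")
    case True
    then have "c = t" using Cons.prems by auto
    then show ?thesis using True by simp
  next
    case False
    then have lu: "last u' \<noteq> s" using Cons.prems(4) by simp
    have su: "set u' \<subseteq> {s,t}" using Cons.prems(1) by simp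
    have u': "u' = alt s t (length u')" using Cons.IH[OF su Cons.prems(2) na] lu by blast
    obtain n where n: "length u' = Suc n" using False by (cases u') auto
    have "c \<noteq> hd u'"
    proof
      assume "c = hd u'"
      then have "c # u' = [] @ [c, c] @ tl u'" using False by simp
      then show False using Cons.prems(3) by blast
    qed
    moreover have "hd u' = (if even n then t else s)" using u' n hd_alt[of s t n] by simp
    ultimately have "c \<noteq> (if even n then t else s)" by simp
    moreover have "c \<in> {s, t}" using Cons.prems(1) by simp
    ultimately have "c = (if even (Suc n) then t else s)" using Cons.prems(2) by auto
    then have "c # u' = alt s t (Suc (length u'))" using u' n by (subst u') simp
    then show ?thesis by simp
  qed
qed

lemma XY_cases:
  fixes X Y :: int
  assumes "X \<ge> 0" "Y \<ge> 0" "X * Y \<le> 3" "X = 0 \<longleftrightarrow> Y = 0"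
  shows "(X, Y) \<in> {(0,0),(1,1),(1,2),(2,1),(1,3),(3,1)}"
proof (cases "X = 0")
  case True then show ?thesis using assms by simp
next
  case False
  then have x1: "X \<ge> 1" "Y \<ge> 1" using assms by auto
  have "X * 1 \<le> X * Y" using x1 by (intro mult_left_mono) auto
  moreover have "1 * Y \<le> X * Y" using x1 by (intro mult_right_mono) auto
  ultimately have "X \<le> 3" "Y \<le> 3" using assms by auto
  then have "X \<in> {1,2,3}" "Y \<in> {1,2,3}" using x1 by auto
  then show ?thesis using assms(3) by auto
qed

lemma braid_all:
  assumes "gcm A" "(- A s t, - A t s, m) \<in> {(0,0,2),(1,1,3),(1,2,4),(2,1,4),(1,3,6),(3,1,6)}"
  shows "Mp A (alt s t m) = Mp A (alt t s m)"
proof -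
  have d: "A s s = 2" "A t t = 2" using assms(1) by (auto simp: gcm_def)
  have "(A s t, A t s, m) \<in> {(0,0,2),(-1,-1,3),(-1,-2,4),(-2,-1,4),(-1,-3,6),(-3,-1,6)}"
    using assms(2) by auto
  then show ?thesis
    using braid_0[of A s t, OF d] braid_1[of A s t, OF d] braid_2[of A s t, OF d] braid_3[of A s t, OF d]
      braid_4[of A s t, OF d] braid_5[of A s t, OF d] by auto
qed

lemma rank2:
  assumes gcm: "gcm A" and st: "s \<noteq> t" and vs: "set vI \<subseteq> {s, t}"
    and hl: "lenI A s t (Mp A (vI @ [s])) \<ge> lenI A s t (Mp A vI)"
  shows "(\<exists>p q. 0 \<le> p \<and> 0 \<le> q \<and> act A vI (e s) = G s t p q)
       \<and> (\<exists>p q. 0 \<le> p \<and> 0 \<le> q \<and> actv A vI (e s) = G s t p q)"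
proof -
  define k where "k = lenI A s t (Mp A vI)"
  obtain u where u: "set u \<subseteq> {s, t}" "length u = k" "Mp A u = Mp A vI"
    using lenI_ex[OF vs] k_def by blast
  have vs': "set (vI @ [s]) \<subseteq> {s,t}" using vs by auto
  have Mvs: "Mp A (vI @ [s]) = Mp A (u @ [s])" using Mp_append_cong u(3) by metis
  have na: "\<forall>xs ys c. u \<noteq> xs @ [c, c] @ ys"
  proof (intro allI notI)
    fix xs ys c assume h: "u = xs @ [c, c] @ ys"
    have "Mp A (xs @ ys) = Mp A vI" using u(3) h Mp_cancel[OF gcm] by metis
    moreover have "set (xs @ ys) \<subseteq> {s,t}" using u(1) h by auto
    ultimately have "k \<le> length (xs @ ys)" using lenI_le[of "xs @ ys" s t A] k_def by simp
    then show False using u(2) h by simp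
  qed
  have nl: "u = [] \<or> last u \<noteq> s"
  proof (rule ccontr)
    assume "\<not> (u = [] \<or> last u \<noteq> s)"
    then obtain u1 where h: "u = u1 @ [s]" by (metis append_butlast_last_id)
    have "Mp A (vI @ [s]) = Mp A (u1 @ [])" using Mvs h Mp_cancel[OF gcm, of u1 s "[]"] by simp
    moreover have "set u1 \<subseteq> {s,t}" using u(1) h by auto
    ultimately have "lenI A s t (Mp A (vI @ [s])) \<le> length u1" using lenI_le[of u1 s t A] by simp
    then show False using hl u(2) h k_def by simp
  qed
  have ualt: "u = alt s t k" using alt_char[OF u(1) st na nl] u(2) by simp
  have X0: "- A s t \<ge> 0" "- A t s \<ge> 0" "- A s t = 0 \<longleftrightarrow> - A t s = 0"
    using gcm st unfolding gcm_def by auto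
  have actu: "act A vI (e s) = act A u (e s)" "actv A vI (e s) = actv A u (e s)"
    using u(3) unfolding Mp_def by auto
  have goal: "?thesis" if "fst (fseq (- A s t) (- A t s) k) \<ge> 0 \<and> snd (fseq (- A s t) (- A t s) k) \<ge> 0"
     "fst (fseq (- A t s) (- A s t) k) \<ge> 0 \<and> snd (fseq (- A t s) (- A s t) k) \<ge> 0"
    using that actu act_alt[OF gcm, of s t k] actv_alt[OF gcm, of s t k] ualt by metis
  show ?thesis
  proof (cases "(- A s t) * (- A t s) \<ge> 4")
    case True
    have "(- A t s) * (- A s t) \<ge> 4" using True by (simp add: mult.commute)
    then show ?thesis using goal fseq_inf[OF X0(1,2) True] fseq_inf[OF X0(2,1)] by blast
  next
    case False
    have "(- A s t, - A t s) \<in> {(0,0),(1,1),(1,2),(2,1),(1,3),(3,1)}"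
      using XY_cases[of "- A s t" "- A t s"] X0 False by linarith
    then obtain m :: nat where m: "(- A s t, - A t s, m) \<in> {(0,0,2),(1,1,3),(1,2,4),(2,1,4),(1,3,6),(3,1,6)}"
      "(- A t s, - A s t, m) \<in> {(0,0,2),(1,1,3),(1,2,4),(2,1,4),(1,3,6),(3,1,6)}"
      by auto
    have m1: "m \<ge> 1" using m by auto
    have br: "Mp A (alt s t m) = Mp A (alt t s m)" using braid_all[OF gcm m(1)] .
    have km: "k < m"
    proof (rule ccontr)
      assume "\<not> k < m"
      then consider "k = m" | "k > m" by linarith
      then show False
      proof cases
        case 1
        obtain m' where m': "m = Suc m'" using m1 by (cases m) auto
        have lst: "last (alt t s m) = s" using last_alt_t[of m t s] m1 by simp
        define B where "B = butlast (alt t s m)"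
        have BB: "alt t s m = B @ [s]" unfolding B_def using lst m1
          by (metis append_butlast_last_id length_alt list.size(3) not_one_le_zero)
        have "Mp A (vI @ [s]) = Mp A (alt t s m @ [s])"
          using Mvs ualt 1 br Mp_append_cong by metis
        also have "\<dots> = Mp A (B @ [s, s] @ [])" using BB by simp
        also have "\<dots> = Mp A (B @ [])" using Mp_cancel[OF gcm] by blast
        finally have "Mp A (vI @ [s]) = Mp A B" by simp
        moreover have "set B \<subseteq> {s,t}" using BB set_alt[of t s m] by auto
        ultimately have "lenI A s t (Mp A (vI @ [s])) \<le> length B" using lenI_le[of B s t A] by simp
        moreover have "length B = m - 1" using BB length_alt[of t s m] by simp
        ultimately show False using hl k_def 1 m1 by simp
      next
        case 2
        define r where "r = k - Suc m"
        define Q where "Q = take r (alt s t k)"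
        have kk: "k = r + Suc m" using 2 r_def by simp
        have "drop r (alt s t k) = alt s t (Suc m)" using drop_alt[of r s t "Suc m"] kk by simp
        then have uQ: "alt s t k = Q @ alt s t (Suc m)" unfolding Q_def by (metis append_take_drop_id)
        obtain m' where m': "m = Suc m'" using m1 by (cases m) auto
        define c0 where "c0 = (if even m then t else s)"
        have a1: "alt s t (Suc m) = c0 # alt s t m" unfolding c0_def by simp
        have a2: "alt t s m = c0 # alt t s m'" unfolding c0_def m' by simp
        have "Mp A vI = Mp A (Q @ [c0] @ alt s t m)" using u(3) ualt uQ a1 by simp
        also have "\<dots> = Mp A ((Q @ [c0]) @ alt t s m)" using br Mp_append_cong by (metis append_assoc)
        also have "\<dots> = Mp A (Q @ [c0, c0] @ alt t s m')" using a2 by simp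
        also have "\<dots> = Mp A (Q @ alt t s m')" using Mp_cancel[OF gcm] by blast
        finally have eqM: "Mp A (Q @ alt t s m') = Mp A vI" by simp
        have "set Q \<subseteq> {s,t}" using set_alt[of s t k] unfolding Q_def by (meson order.trans set_take_subset)
        then have "set (Q @ alt t s m') \<subseteq> {s,t}" using set_alt[of t s m'] by auto
        then have "k \<le> length (Q @ alt t s m')" using lenI_le[of "Q @ alt t s m'" s t A] eqM k_def by simp
        moreover have "length Q = r" unfolding Q_def using kk by simp
        ultimately show False using kk m' by simp
      qed
    qed
    show ?thesis using goal fseq_fin[OF m(1) km] fseq_fin[OF m(2) km] by blast
  qed
qed

lemma e_nonneg: "0 \<le> e s j" unfolding sroot_def by simp

lemma pos_main:
  assumes gcm: "gcm A"
  shows "len A (Mp A (ws @ [s])) \<ge> len A (Mp A ws) \<Longrightarrow>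
         (\<forall>j. 0 \<le> act A ws (e s) j) \<and> (\<forall>j. 0 \<le> actv A ws (e s) j)"
proof (induction "len A (Mp A ws)" arbitrary: ws s rule: less_induct)
  case less
  define n where "n = len A (Mp A ws)"
  obtain w0 where w0: "length w0 = n" "Mp A w0 = Mp A ws" using len_ex n_def by blast
  show ?case
  proof (cases "n = 0")
    case True
    then have "w0 = []" using w0 by simp
    then have "Mp A ws = Mp A []" using w0 by simp
    then show ?thesis using Mp_Nil_act e_nonneg by metis
  next
    case False
    then obtain w1 t where w1: "w0 = w1 @ [t]" using w0(1) by (metis append_butlast_last_id length_0_conv)
    have Lw1: "len A (Mp A w1) \<le> n - 1" using len_le[of A w1] w0(1) w1 by simp
    have ts: "t \<noteq> s"
    proof
      assume "t = s"
      have "Mp A (ws @ [s]) = Mp A (w0 @ [s])" using w0(2) Mp_append_cong by metis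
      also have "\<dots> = Mp A (w1 @ [s, s] @ [])" using w1 \<open>t = s\<close> by simp
      also have "\<dots> = Mp A (w1 @ [])" using Mp_cancel[OF gcm] by blast
      finally have "len A (Mp A (ws @ [s])) \<le> n - 1" using Lw1 by simp
      then show False using less.prems n_def False by simp
    qed
    define P where "P = (\<lambda>(v, vI). set vI \<subseteq> {s, t} \<and> Mp A (v @ vI) = Mp A ws
                          \<and> len A (Mp A v) + lenI A s t (Mp A vI) \<le> n)"
    have "lenI A s t (Mp A [t]) \<le> 1" using lenI_le[of "[t]" s t A] by simp
    then have "P (w1, [t])" unfolding P_def using w0 w1 Lw1 False by auto
    then obtain vv where vvP: "P vv" and vvmin: "\<forall>y. P y \<longrightarrow> len A (Mp A (fst vv)) \<le> len A (Mp A (fst y))"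
      using ex_has_least_nat[of P "(w1, [t])" "\<lambda>y. len A (Mp A (fst y))"] by blast
    obtain v vI where vv: "vv = (v, vI)" by fastforce
    have vI: "set vI \<subseteq> {s, t}" "Mp A (v @ vI) = Mp A ws" "len A (Mp A v) + lenI A s t (Mp A vI) \<le> n"
      using vvP vv unfolding P_def by auto
    have Lv: "len A (Mp A v) < len A (Mp A ws)"
      using vvmin \<open>P (w1, [t])\<close> vv Lw1 False n_def by fastforce
    have c1: "len A (Mp A (v @ [c])) \<ge> len A (Mp A v)" if c: "c \<in> {s, t}" for c
    proof (rule ccontr)
      assume h: "\<not> len A (Mp A (v @ [c])) \<ge> len A (Mp A v)"
      have "Mp A ((v @ [c]) @ (c # vI)) = Mp A (v @ [c, c] @ vI)" by simp
      also have "\<dots> = Mp A (v @ vI)" using Mp_cancel[OF gcm] by blast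
      finally have m1: "Mp A ((v @ [c]) @ (c # vI)) = Mp A ws" using vI(2) by simp
      have "lenI A s t (Mp A (c # vI)) \<le> lenI A s t (Mp A vI) + 1" using lenI_Cons[OF c vI(1)] .
      then have "P (v @ [c], c # vI)" unfolding P_def using m1 vI c h by auto
      then have "len A (Mp A v) \<le> len A (Mp A (v @ [c]))" using vvmin vv by fastforce
      then show False using h by simp
    qed
    have IHs: "(\<forall>j. 0 \<le> act A v (e c) j) \<and> (\<forall>j. 0 \<le> actv A v (e c) j)" if "c \<in> {s, t}" for c
      using less.hyps[OF Lv c1[OF that]] .
    have c3: "lenI A s t (Mp A (vI @ [s])) \<ge> lenI A s t (Mp A vI)"
    proof (rule ccontr)
      assume h: "\<not> ?thesis"
      have "Mp A (ws @ [s]) = Mp A (v @ (vI @ [s]))" using vI(2) Mp_append_cong[of A ws "v @ vI" "[s]" "[s]"] by simp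
      then have "len A (Mp A (ws @ [s])) \<le> len A (Mp A v) + len A (Mp A (vI @ [s]))"
        using len_append[of A v "vI @ [s]"] by simp
      also have "\<dots> \<le> len A (Mp A v) + lenI A s t (Mp A (vI @ [s]))"
        using len_le_lenI[of "vI @ [s]" s t A] vI(1) by simp
      finally show False using h vI(3) less.prems n_def by simp
    qed
    obtain p q where pq: "0 \<le> p" "0 \<le> q" "act A vI (e s) = G s t p q"
      using rank2[OF gcm ts[symmetric] vI(1) c3] by blast
    obtain p' q' where pq': "0 \<le> p'" "0 \<le> q'" "actv A vI (e s) = G s t p' q'"
      using rank2[OF gcm ts[symmetric] vI(1) c3] by blast
    have "act A ws (e s) = act A v (act A vI (e s))"
      using vI(2) unfolding Mp_def by (metis act_append prod.inject)
    also have "\<dots> = (\<lambda>j. p * act A v (e s) j + q * act A v (e t) j)"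
      unfolding pq(3) G_def act_lin ..
    finally have r1: "\<forall>j. 0 \<le> act A ws (e s) j" using pq IHs by simp
    have "actv A ws (e s) = actv A v (actv A vI (e s))"
      using vI(2) unfolding Mp_def by (metis actv_append prod.inject)
    also have "\<dots> = (\<lambda>j. p' * actv A v (e s) j + q' * actv A v (e t) j)"
      unfolding pq'(3) G_def actv_lin ..
    finally have r2: "\<forall>j. 0 \<le> actv A ws (e s) j" using pq' IHs by simp
    show ?thesis using r1 r2 by simp
  qed
qed

lemma sr_e_self: assumes "gcm A" shows "sr A s (e s) = (\<lambda>j. (-1) * e s j + 0 * e s j)"
proof -
  have "A s s = 2" using assms by (simp add: gcm_def)
  then show ?thesis unfolding sr_def pair_e_e by (simp add: fun_eq_iff)
qed
lemma srv_e_self: assumes "gcm A" shows "srv A s (e s) = (\<lambda>j. (-1) * e s j + 0 * e s j)"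
proof -
  have "A s s = 2" using assms by (simp add: gcm_def)
  then show ?thesis unfolding srv_def pair_e_e by (simp add: fun_eq_iff)
qed

lemma act_neg: "act A ws (\<lambda>j. (-1) * x j + 0 * x j) = (\<lambda>j. - act A ws x j)"
  unfolding act_lin by simp
lemma actv_neg: "actv A ws (\<lambda>j. (-1) * x j + 0 * x j) = (\<lambda>j. - actv A ws x j)"
  unfolding actv_lin by simp

lemma act_snoc_self: assumes "gcm A" shows "act A (ws @ [s]) (e s) = (\<lambda>j. - act A ws (e s) j)"
  using act_append[of A ws "[s]"] sr_e_self[OF assms] act_neg by simp
lemma actv_snoc_self: assumes "gcm A" shows "actv A (ws @ [s]) (e s) = (\<lambda>j. - actv A ws (e s) j)"
  using actv_append[of A ws "[s]"] srv_e_self[OF assms] actv_neg by simp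

lemma sign:
  assumes gcm: "gcm A"
  shows "((\<forall>j. 0 \<le> act A ws (e s) j) \<and> (\<forall>j. 0 \<le> actv A ws (e s) j))
       \<or> ((\<forall>j. act A ws (e s) j \<le> 0) \<and> (\<forall>j. actv A ws (e s) j \<le> 0))"
proof (cases "len A (Mp A (ws @ [s])) \<ge> len A (Mp A ws)")
  case True then show ?thesis using pos_main[OF gcm] by blast
next
  case False
  have "Mp A ((ws @ [s]) @ [s]) = Mp A (ws @ [s, s] @ [])" by simp
  also have "\<dots> = Mp A ws" using Mp_cancel[OF gcm, of ws s "[]"] by simp
  finally have "len A (Mp A ((ws @ [s]) @ [s])) \<ge> len A (Mp A (ws @ [s]))" using False by simp
  then have "(\<forall>j. 0 \<le> act A (ws @ [s]) (e s) j) \<and> (\<forall>j. 0 \<le> actv A (ws @ [s]) (e s) j)"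
    using pos_main[OF gcm] by blast
  then show ?thesis unfolding act_snoc_self[OF gcm] actv_snoc_self[OF gcm] by auto
qed

lemma act_zero: "act A ws (\<lambda>_. 0) = (\<lambda>_. 0)"
  using act_lin[of A ws 0 "\<lambda>_. 0" 0 "\<lambda>_. 0"] by simp
lemma actv_zero: "actv A ws (\<lambda>_. 0) = (\<lambda>_. 0)"
  using actv_lin[of A ws 0 "\<lambda>_. 0" 0 "\<lambda>_. 0"] by simp

lemma root_nonzero: assumes "gcm A" shows "\<exists>j. act A ws (e s) j \<noteq> 0"
proof (rule ccontr)
  assume "\<not> ?thesis"
  then have "act A ws (e s) = (\<lambda>_. 0)" by auto
  then have "e s = (\<lambda>_. 0)" using act_rev_act[OF assms, of ws "e s"] act_zero by metis
  then show False unfolding sroot_def by (metis zero_neq_one)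
qed
lemma coroot_nonzero: assumes "gcm A" shows "\<exists>j. actv A ws (e s) j \<noteq> 0"
proof (rule ccontr)
  assume "\<not> ?thesis"
  then have "actv A ws (e s) = (\<lambda>_. 0)" by auto
  then have "e s = (\<lambda>_. 0)" using actv_rev_actv[OF assms, of ws "e s"] actv_zero by metis
  then show False unfolding sroot_def by (metis zero_neq_one)
qed

lemma sign_pos: assumes gcm: "gcm A" and "\<forall>j. 0 \<le> act A ws (e s) j"
  shows "\<forall>j. 0 \<le> actv A ws (e s) j"
proof -
  have "\<not> (\<forall>j. act A ws (e s) j \<le> 0)" using root_nonzero[OF gcm, of ws s] assms(2)
    by (meson order_antisym)
  then show ?thesis using sign[OF gcm, of ws s] by blast
qed
lemma sign_neg: assumes gcm: "gcm A" and "\<forall>j. act A ws (e s) j \<le> 0"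
  shows "\<forall>j. actv A ws (e s) j \<le> 0"
proof -
  have "\<not> (\<forall>j. 0 \<le> act A ws (e s) j)" using root_nonzero[OF gcm, of ws s] assms(2)
    by (meson order_antisym)
  then show ?thesis using sign[OF gcm, of ws s] by blast
qed

lemma int_mult_eq_1_nonneg: "(a::int) * b = 1 \<Longrightarrow> 0 \<le> a \<Longrightarrow> a = 1"
  by (metis pos_zmult_eq_1_iff zero_less_mult_iff zero_less_one order_le_less)

lemma coroot_wd0:
  assumes gcm: "gcm A" and h: "act A u (e i) = e j"
  shows "actv A u (e i) = e j"
proof -
  define y where "y = actv A u (e i)"
  have "\<forall>k. 0 \<le> act A u (e i) k" unfolding h by (simp add: sroot_def)
  then have ypos: "\<forall>k. 0 \<le> y k" unfolding y_def by (rule sign_pos[OF gcm])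
  have "act A (j # u) (e i) = (\<lambda>k. (-1) * e j k + 0 * e j k)" using h sr_e_self[OF gcm] by simp
  then have "\<forall>k. act A (j # u) (e i) k \<le> 0" by (simp add: e_nonneg)
  then have "\<forall>k. actv A (j # u) (e i) k \<le> 0" using sign_neg[OF gcm] by blast
  then have "\<forall>k. srv A j y k \<le> 0" unfolding y_def by simp
  note sv = this
  have "y k \<le> 0" if "k \<noteq> j" for k
  proof -
    have "srv A j y k = y k" using that by (simp add: srv_def sroot_def)
    then show ?thesis using sv by metis
  qed
  then have "\<forall>k. k \<noteq> j \<longrightarrow> y k \<le> 0" by blast
  then have yk: "\<forall>k. k \<noteq> j \<longrightarrow> y k = 0" using ypos by (meson order_antisym)
  then have ye: "y = (\<lambda>k. y j * e j k + 0 * e j k)" unfolding sroot_def by (auto simp: fun_eq_iff)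
  have "actv A (rev u) y = e i" unfolding y_def using actv_rev_actv[OF gcm] .
  moreover have "actv A (rev u) y = (\<lambda>k. y j * actv A (rev u) (e j) k + 0 * actv A (rev u) (e j) k)"
    by (subst ye) (rule actv_lin)
  ultimately have "(\<lambda>k. y j * actv A (rev u) (e j) k + 0 * actv A (rev u) (e j) k) = e i" by simp
  then have "y j * actv A (rev u) (e j) i + 0 * actv A (rev u) (e j) i = e i i" by (rule fun_cong)
  then have "y j * actv A (rev u) (e j) i = 1" by (simp add: sroot_def)
  then have "y j = 1" using int_mult_eq_1_nonneg ypos by blast
  then show ?thesis using ye unfolding y_def by simp
qed

lemma coroot_wd:
  assumes gcm: "gcm A" and h: "act A ws (e i) = act A ws' (e j)"
  shows "actv A ws (e i) = actv A ws' (e j)"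
proof -
  have "act A (rev ws' @ ws) (e i) = e j" using h act_append act_rev_act[OF gcm] by metis
  then have "actv A (rev ws' @ ws) (e i) = e j" using coroot_wd0[OF gcm] by blast
  then have "actv A ws' (actv A (rev ws') (actv A ws (e i))) = actv A ws' (e j)" using actv_append by metis
  then show ?thesis using actv_actv_rev[OF gcm] by metis
qed

lemma coroot_eq:
  assumes gcm: "gcm A" and b: "b = act A ws (e i)"
  shows "coroot A b = actv A ws (e i)"
proof -
  have "\<exists>y. \<exists>ws i. b = act A ws (sroot i) \<and> y = actv A ws (sroot i)" using b by blast
  then have "\<exists>ws' i'. b = act A ws' (e i') \<and> coroot A b = actv A ws' (e i')"
    unfolding coroot_def by (rule someI_ex)
  then show ?thesis using coroot_wd[OF gcm] b by metis
qed

lemma refl_eq: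
  assumes gcm: "gcm A" and b: "b = act A ws (e i)"
  shows "refl A b x = (\<lambda>j. x j - pair A (coroot A b) x * b j)"
proof -
  have "\<exists>f. \<exists>ws i. b = act A ws (sroot i) \<and> f = (\<lambda>x. act A ws (sr A i (act A (rev ws) x)))" using b by blast
  then have "\<exists>ws' i'. b = act A ws' (e i') \<and> refl A b = (\<lambda>x. act A ws' (sr A i' (act A (rev ws') x)))"
    unfolding refl_def by (rule someI_ex)
  then obtain ws' i' where w: "b = act A ws' (e i')" "refl A b = (\<lambda>x. act A ws' (sr A i' (act A (rev ws') x)))"
    by blast
  have cb: "coroot A b = actv A ws' (e i')" using coroot_eq[OF gcm w(1)] .
  define z where "z = act A (rev ws') x"
  have hsr: "sr A i' z = (\<lambda>j. 1 * z j + (- pair A (e i') z) * e i' j)" unfolding sr_def by auto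
  have s1: "refl A b x = act A ws' (sr A i' z)" unfolding w(2) z_def ..
  have r: "refl A b x = (\<lambda>j. 1 * act A ws' z j + (- pair A (e i') z) * act A ws' (e i') j)"
    unfolding s1 hsr act_lin ..
  have a: "act A ws' z = x" unfolding z_def using act_act_rev[OF gcm] .
  have p: "pair A (e i') z = pair A (coroot A b) x" unfolding cb z_def pair_actv ..
  have "refl A b x = (\<lambda>j. x j - pair A (coroot A b) x * act A ws' (e i') j)"
    unfolding r a p by simp
  then show ?thesis unfolding w(1)[symmetric] .
qed

lemma pair_coroot_self:
  assumes gcm: "gcm A" and b: "b = act A ws (e i)"
  shows "pair A (coroot A b) b = 2"
proof -
  have c: "coroot A b = actv A ws (e i)" using coroot_eq[OF gcm b] .
  have "pair A (coroot A b) b = pair A (actv A ws (e i)) (act A ws (e i))" using c b by simp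
  also have "\<dots> = pair A (e i) (e i)" unfolding pair_actv act_rev_act[OF gcm] ..
  finally have "pair A (coroot A b) b = pair A (e i) (e i)" .
  then show ?thesis using gcm by (simp add: pair_e_e gcm_def)
qed

lemma roots_iff: "b \<in> roots A \<longleftrightarrow> (\<exists>ws i. b = act A ws (e i))"
  unfolding roots_def by auto

lemma sr_other: "j \<noteq> i \<Longrightarrow> sr A i x j = x j" by (simp add: sr_def sroot_def)

lemma root_pos: assumes gcm: "gcm A" and b: "b \<in> roots A" and j: "b j > 0" shows "b \<in> pos_roots A"
proof -
  obtain ws i where bw: "b = act A ws (e i)" using b roots_iff by blast
  have "\<not> (\<forall>j. b j \<le> 0)" using j by (meson not_le)
  then have "\<forall>j. 0 \<le> b j" using sign[OF gcm, of ws i] bw by blast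
  then show ?thesis using b unfolding pos_roots_def by blast
qed

lemma root_neg: assumes gcm: "gcm A" and b: "b \<in> roots A" and j: "b j < 0" shows "b \<in> neg_roots A"
proof -
  obtain ws i where bw: "b = act A ws (e i)" using b roots_iff by blast
  have "\<not> (\<forall>j. 0 \<le> b j)" using j by (meson not_le)
  then have "\<forall>j. b j \<le> 0" using sign[OF gcm, of ws i] bw by blast
  then show ?thesis using b unfolding neg_roots_def by blast
qed

lemma root_sr: assumes "b \<in> roots A" shows "sr A i b \<in> roots A"
proof -
  obtain ws k where bw: "b = act A ws (e k)" using assms roots_iff by blast
  have "sr A i b = act A (i # ws) (e k)" using bw by simp
  then show ?thesis unfolding roots_iff by blast
qed

lemma root_e: "e i \<in> roots A"
proof -
  have "e i = act A [] (e i)" by simp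
  then show ?thesis unfolding roots_iff by blast
qed

lemma root_uminus: assumes gcm: "gcm A" and b: "b \<in> roots A" shows "(\<lambda>j. - b j) \<in> roots A"
proof -
  obtain ws i where bw: "b = act A ws (e i)" using b roots_iff by blast
  have "(\<lambda>j. - b j) = act A (ws @ [i]) (e i)" using act_snoc_self[OF gcm] bw by simp
  then show ?thesis unfolding roots_iff by blast
qed

lemma root_simple:
  assumes gcm: "gcm A" and b: "b \<in> roots A" and pos: "\<forall>j. 0 \<le> b j" and z: "\<forall>j. j \<noteq> i \<longrightarrow> b j = 0"
  shows "b = e i"
proof -
  obtain ws k where bw: "b = act A ws (e k)" using b roots_iff by blast
  have be: "b = (\<lambda>j. b i * e i j + 0 * e i j)" using z unfolding sroot_def by (auto simp: fun_eq_iff)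
  have "act A (rev ws) b = e k" unfolding bw using act_rev_act[OF gcm] .
  moreover have "act A (rev ws) b = (\<lambda>j. b i * act A (rev ws) (e i) j + 0 * act A (rev ws) (e i) j)"
    by (subst be) (rule act_lin)
  ultimately have "(\<lambda>j. b i * act A (rev ws) (e i) j + 0 * act A (rev ws) (e i) j) = e k" by simp
  then have "b i * act A (rev ws) (e i) k + 0 * act A (rev ws) (e i) k = e k k" by (rule fun_cong)
  then have "b i * act A (rev ws) (e i) k = 1" by (simp add: sroot_def)
  then have "b i = 1" using int_mult_eq_1_nonneg pos by blast
  then show ?thesis using be by simp
qed

lemma refl_root: assumes gcm: "gcm A" and b: "b \<in> roots A" and x: "x \<in> roots A"
  shows "refl A b x \<in> roots A"
proof -
  obtain ws i where bw: "b = act A ws (e i)" using b roots_iff by blast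
  have "\<exists>f. \<exists>ws i. b = act A ws (sroot i) \<and> f = (\<lambda>x. act A ws (sr A i (act A (rev ws) x)))" using bw by blast
  then have "\<exists>ws' i'. b = act A ws' (e i') \<and> refl A b = (\<lambda>x. act A ws' (sr A i' (act A (rev ws') x)))"
    unfolding refl_def by (rule someI_ex)
  then obtain ws' i' where w: "refl A b = (\<lambda>x. act A ws' (sr A i' (act A (rev ws') x)))" by blast
  obtain v l where xv: "x = act A v (e l)" using x roots_iff by blast
  have "refl A b x = act A (ws' @ [i'] @ rev ws' @ v) (e l)" unfolding w xv by (simp add: act_append)
  then show ?thesis unfolding roots_iff by blast
qed

lemma coroot_sr: assumes gcm: "gcm A" and b: "b \<in> roots A"
  shows "coroot A (sr A i b) = srv A i (coroot A b)"
proof -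
  obtain ws k where bw: "b = act A ws (e k)" using b roots_iff by blast
  have "sr A i b = act A (i # ws) (e k)" using bw by simp
  then have "coroot A (sr A i b) = actv A (i # ws) (e k)" by (rule coroot_eq[OF gcm])
  then show ?thesis using coroot_eq[OF gcm bw] by simp
qed

lemma coroot_act: assumes gcm: "gcm A" and b: "b \<in> roots A"
  shows "coroot A (act A w b) = actv A w (coroot A b)"
proof -
  obtain ws k where bw: "b = act A ws (e k)" using b roots_iff by blast
  have "act A w b = act A (w @ ws) (e k)" using bw by (simp add: act_append)
  then have "coroot A (act A w b) = actv A (w @ ws) (e k)" by (rule coroot_eq[OF gcm])
  then show ?thesis using coroot_eq[OF gcm bw] by (simp add: actv_append)
qed

lemma root_act: assumes "b \<in> roots A" shows "act A w b \<in> roots A"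
proof -
  obtain ws k where bw: "b = act A ws (e k)" using assms roots_iff by blast
  have "act A w b = act A (w @ ws) (e k)" using bw by (simp add: act_append)
  then show ?thesis unfolding roots_iff by blast
qed

lemma refl_eq': assumes gcm: "gcm A" and b: "b \<in> roots A"
  shows "refl A b x = (\<lambda>j. x j - pair A (coroot A b) x * b j)"
proof -
  obtain ws k where bw: "b = act A ws (e k)" using b roots_iff by blast
  show ?thesis using refl_eq[OF gcm bw] .
qed

lemma pair_coroot_self': assumes gcm: "gcm A" and b: "b \<in> roots A" shows "pair A (coroot A b) b = 2"
proof -
  obtain ws k where bw: "b = act A ws (e k)" using b roots_iff by blast
  show ?thesis using pair_coroot_self[OF gcm bw] .
qed

lemma pair_neg_e: assumes gcm: "gcm A" shows "pair A y (sr A i (e i)) = - pair A y (e i)"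
  unfolding sr_e_self[OF gcm] pair_right_lin by simp

theorem lemma2p28:
  fixes A :: "'i::finite \<Rightarrow> 'i \<Rightarrow> int" and b :: "'i \<Rightarrow> int" and i :: 'i and w :: "'i list"
  assumes "gcm A"
    and "b \<in> pos_roots A"
    and "act A (rev w) (sroot i) = sroot i"
    and "quantum A b" and "quantum A (sr A i b)" and "quantum A (act A w b)"
  shows "quantum A (sr A i (act A w b))
         \<and> srv A i (actv A w (coroot A b))
             = (\<lambda>j. actv A w (coroot A b) j + srv A i (coroot A b) j - coroot A b j)"
proof -
  note gcm = assms(1)
  have broot: "b \<in> roots A" using assms(2) unfolding pos_roots_def by blast
  have bpos: "\<forall>j. 0 \<le> b j" using assms(2) unfolding pos_roots_def by blast
  define bv where "bv = coroot A b"
  define g where "g = act A w b"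
  define gv where "gv = coroot A g"
  define d where "d = sr A i g"
  define dv where "dv = coroot A d"
  define r where "r = sr A i b"
  define rv where "rv = coroot A r"
  have groot: "g \<in> roots A" unfolding g_def using root_act[OF broot] .
  have droot: "d \<in> roots A" unfolding d_def using root_sr[OF groot] .
  have rroot: "r \<in> roots A" unfolding r_def using root_sr[OF broot] .
  have gv: "gv = actv A w bv" unfolding gv_def g_def bv_def using coroot_act[OF gcm broot] .
  have dv: "dv = srv A i gv" unfolding dv_def d_def gv_def using coroot_sr[OF gcm groot] .
  have rv: "rv = srv A i bv" unfolding rv_def r_def bv_def using coroot_sr[OF gcm broot] .
  define c where "c = pair A gv (e i)"
  have c_bv: "c = pair A bv (e i)" unfolding c_def gv pair_actv using assms(3) by simp
  have hw: "act A w (e i) = e i" using act_act_rev[OF gcm, of w "e i"] assms(3) by simp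
  have part2: "srv A i (actv A w bv) = (\<lambda>j. actv A w bv j + srv A i bv j - bv j)"
    using c_bv unfolding srv_def c_def gv[symmetric] by (simp add: fun_eq_iff)
  have rpos: "r \<in> pos_roots A" using assms(5) unfolding quantum_def r_def by blast
  obtain jb where jb: "jb \<noteq> i" "b jb > 0"
  proof -
    have "\<exists>jb. jb \<noteq> i \<and> b jb \<noteq> 0"
    proof (rule ccontr)
      assume "\<not> ?thesis"
      then have "b = e i" using root_simple[OF gcm broot bpos] by blast
      then have "r i = -1" unfolding r_def using sr_e_self[OF gcm] by (simp add: sroot_def)
      moreover have "0 \<le> r i" using rpos unfolding pos_roots_def by blast
      ultimately show False by simp
    qed
    then obtain jb where h: "jb \<noteq> i" "b jb \<noteq> 0" by blast
    have "0 \<le> b jb" using bpos by blast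
    then have "0 < b jb" using h(2) by simp
    then show ?thesis using that h(1) by blast
  qed
  have K: "c = -1" if cneg: "c < 0"
  proof -
    have rjb: "r jb = b jb" unfolding r_def using sr_other[OF jb(1)] .
    have pre: "pair A rv (e i) = - c" unfolding rv c_bv pair_srv_sr pair_neg_e[OF gcm] ..
    have re: "refl A r (e i) = (\<lambda>j. e i j - pair A rv (e i) * r j)"
      unfolding rv_def using refl_eq'[OF gcm rroot] .
    have "refl A r (e i) jb = c * b jb" unfolding re pre rjb using jb(1) by (simp add: sroot_def)
    moreover have "c * b jb < 0" using cneg jb(2) by (simp add: mult_neg_pos)
    ultimately have "refl A r (e i) \<in> neg_roots A"
      using root_neg[OF gcm refl_root[OF gcm rroot root_e[of i A]], of jb] by simp
    moreover have "e i \<in> pos_roots A" using root_e[of i A] unfolding pos_roots_def by (simp add: sroot_def)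
    ultimately have "e i \<in> Inv A (refl A r)" unfolding Inv_def by blast
    moreover have "e i \<noteq> r" using rjb jb by (auto simp: sroot_def)
    ultimately have "pair A rv (e i) = 1" using assms(5) unfolding quantum_def rv_def r_def by blast
    then show ?thesis using pre by simp
  qed
  have gpos: "g \<in> pos_roots A" using assms(6) unfolding quantum_def g_def by blast
  obtain j0 where j0: "j0 \<noteq> i" "g j0 > 0"
  proof -
    have "\<exists>j0. j0 \<noteq> i \<and> g j0 \<noteq> 0"
    proof (rule ccontr)
      assume "\<not> ?thesis"
      then have "g = e i" using root_simple[OF gcm groot] gpos unfolding pos_roots_def by blast
      then have "b = e i" using act_rev_act[OF gcm, of w b] assms(3) unfolding g_def by simp
      then show False using jb by (simp add: sroot_def)
    qed
    then obtain j0 where h: "j0 \<noteq> i" "g j0 \<noteq> 0" by blast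
    have "0 \<le> g j0" using gpos unfolding pos_roots_def by blast
    then have "0 < g j0" using h(2) by simp
    then show ?thesis using that h(1) by blast
  qed
  have dj0: "d j0 = g j0" unfolding d_def using sr_other[OF j0(1)] .
  have dpos: "d \<in> pos_roots A" using root_pos[OF gcm droot, of j0] dj0 j0 by simp
  have dd: "pair A dv d = 2" unfolding dv_def using pair_coroot_self'[OF gcm droot] .
  have dve: "pair A dv (e i) = - c" unfolding dv c_def pair_srv_sr pair_neg_e[OF gcm] ..
  have refld: "refl A d x = (\<lambda>j. x j - pair A dv x * d j)" for x
    unfolding dv_def using refl_eq'[OF gcm droot] .
  have reflg: "refl A g x = (\<lambda>j. x j - pair A gv x * g j)" for x
    unfolding gv_def using refl_eq'[OF gcm groot] .
  have srd: "sr A i d = g" unfolding d_def using sr_sr[OF gcm] .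
  have qd: "pair A dv x = 1" if x: "x \<in> Inv A (refl A d) - {d}" for x
  proof -
    have xpos: "x \<in> pos_roots A" and xneg: "refl A d x \<in> neg_roots A" and xd: "x \<noteq> d"
      using x unfolding Inv_def by auto
    have xroot: "x \<in> roots A" and xnn: "\<forall>j. 0 \<le> x j" using xpos unfolding pos_roots_def by auto
    have key: "pair A dv x = pair A gv (sr A i x)" unfolding dv pair_srv_sr ..
    show ?thesis
    proof (cases "\<forall>j. j \<noteq> i \<longrightarrow> x j = 0")
      case True
      then have xe: "x = e i" using root_simple[OF gcm xroot xnn] by blast
      have "refl A d (e i) i = 1 + c * d i" unfolding refld dve by (simp add: sroot_def)
      moreover have "refl A d (e i) i \<le> 0" using xneg xe unfolding neg_roots_def by blast
      moreover have "0 \<le> d i" using dpos unfolding pos_roots_def by blast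
      ultimately have "c < 0"
      proof -
        assume a1: "refl A d (e i) i = 1 + c * d i" and a2: "refl A d (e i) i \<le> 0" and a3: "0 \<le> d i"
        show "c < 0"
        proof (rule ccontr)
          assume "\<not> c < 0"
          then have "0 \<le> c * d i" using a3 by simp
          then show False using a1 a2 by simp
        qed
      qed
      then have "c = -1" using K by blast
      then show ?thesis using xe dve by simp
    next
      case False
      then obtain j1 where j1: "j1 \<noteq> i" "x j1 \<noteq> 0" by blast
      have "0 \<le> x j1" using xnn by blast
      then have xj1: "x j1 > 0" using j1(2) by simp
      define x' where "x' = sr A i x"
      have x'root: "x' \<in> roots A" unfolding x'_def using root_sr[OF xroot] .
      have x'pos: "x' \<in> pos_roots A" using root_pos[OF gcm x'root, of j1] sr_other[OF j1(1)] xj1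
        unfolding x'_def by simp
      define h where "h = refl A d x"
      define m where "m = pair A dv x"
      have hroot: "h \<in> roots A" unfolding h_def using refl_root[OF gcm droot xroot] .
      have hle: "\<forall>j. h j \<le> 0" using xneg unfolding h_def neg_roots_def by blast
      have hform: "h = (\<lambda>j. 1 * x j + (- m) * d j)" unfolding h_def refld m_def by (simp add: fun_eq_iff)
      have "sr A i h = (\<lambda>j. 1 * x' j + (- m) * g j)" unfolding hform sr_lin x'_def srd ..
      also have "\<dots> = refl A g x'" unfolding reflg m_def key x'_def by (simp add: fun_eq_iff)
      finally have srh: "sr A i h = refl A g x'" .
      show ?thesis
      proof (cases "\<exists>j2. j2 \<noteq> i \<and> h j2 < 0")
        case True
        then obtain j2 where j2: "j2 \<noteq> i" "h j2 < 0" by blast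
        have "sr A i h \<in> neg_roots A" using root_neg[OF gcm root_sr[OF hroot, of i], of j2] sr_other[OF j2(1), of A h] j2(2)
          by simp
        then have "x' \<in> Inv A (refl A g)" using x'pos srh unfolding Inv_def by simp
        moreover have "x' \<noteq> g"
        proof
          assume "x' = g"
          then have "sr A i (sr A i x) = sr A i g" unfolding x'_def by simp
          then have "x = d" unfolding sr_sr[OF gcm, of i x] d_def .
          then show False using xd by simp
        qed
        ultimately have "pair A gv x' = 1" using assms(6) unfolding quantum_def gv_def g_def by blast
        then show ?thesis using key unfolding x'_def by simp
      next
        case False
        have hz: "\<forall>j. j \<noteq> i \<longrightarrow> h j = 0"
        proof (intro allI impI)
          fix j assume "j \<noteq> i"
          then have "\<not> h j < 0" using False by blast
          moreover have "h j \<le> 0" using hle by blast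
          ultimately show "h j = 0" by simp
        qed
        have "(\<lambda>j. - h j) = e i"
          using root_simple[OF gcm root_uminus[OF gcm hroot]] hz hle by simp
        then have hh: "h = (\<lambda>j. (-1) * e i j + 0 * e i j)"
        proof -
          assume a: "(\<lambda>j. - h j) = e i"
          show ?thesis
          proof
            fix j
            have "- h j = e i j" using fun_cong[OF a, of j] by simp
            then show "h j = (-1) * e i j + 0 * e i j" by simp
          qed
        qed
        have xform: "x = (\<lambda>j. m * d j + (-1) * e i j)"
        proof
          fix j
          have "h j = x j - m * d j" using hform by simp
          then show "x j = m * d j + (-1) * e i j" using hh by simp
        qed
        have "m = pair A dv x" unfolding m_def ..
        also have "\<dots> = m * 2 + (-1) * (- c)" by (subst xform) (simp only: pair_right_lin dd dve)
        finally have mc: "m = - c" by linarith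
        have "c < 0"
        proof (rule ccontr)
          assume "\<not> c < 0"
          then have "m \<le> 0" using mc by simp
          moreover have "0 \<le> d i" using dpos unfolding pos_roots_def by blast
          ultimately have "m * d i \<le> 0" by (simp add: mult_nonpos_nonneg)
          moreover have "x i = m * d i - 1" using xform by (simp add: fun_eq_iff sroot_def)
          moreover have "0 \<le> x i" using xnn by blast
          ultimately show False by linarith
        qed
        then show ?thesis using K mc m_def by simp
      qed
    qed
  qed
  have "quantum A d" unfolding quantum_def using dpos qd[unfolded dv_def] by blast
  then show ?thesis using part2 unfolding d_def g_def bv_def by simp
qed

end
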